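(* Let $\alpha$ be a complex parameter and let $B_n^{(\alpha)}(x)$ be the generalized Bernoulli polynomials, defined by $e^{xt}\left(\frac{t}{e^t-1}\right)^{\alpha}=\sum_{n\ge0}B_n^{(\alpha)}(x)\frac{t^n}{n!}$. For $n\ge0$ put $$T_n(\alpha)=\sum_{k=0}^{n}(-1)^k\binom{k+\alpha-1}{k}\sum_{j=0}^{k}\frac{j!\,(-1)^{k+j}}{(n+j)!}\binom{k}{j}\left\{{n+j\atop j}\right\}.$$ Then $\left(\frac{t}{e^t-1}\right)^{\alpha}=\sum_{n\ge0}T_n(\alpha)t^n$, and for every $n\ge0$, $$B_n^{(\alpha)}(x)=n!\sum_{i=0}^{n}T_i(\alpha)\frac{x^{n-i}}{(n-i)!}.$$
   Context: $\left\{{m\atop j}\right\}$ denotes the Stirling number of the second kind, with $\left\{{0\atop 0}\right\}=1$ and $\left\{{m\atop 0}\right\}=0$ for $m>0$. For complex $y$ and integer $k\ge0$, $\binom{y}{k}=\frac{y(y-1)\cdots(y-k+1)}{k!}$. The power $\left(\frac{t}{e^t-1}\right)^{\alpha}$ is the formal series $(1+h)^{-\alpha}=\sum_{k\ge0}(-1)^k\binom{k+\alpha-1}{k}h^k$ with $h=\frac{e^t-1}{t}-1$. *)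

theory Defs
  imports Complex_Main "HOL-Computational_Algebra.Formal_Power_Series"
    "HOL-Combinatorics.Stirling"
begin

text \<open>h = (e^t - 1)/t - 1 as a formal power series (shift drops the zero constant term of e^t - 1).\<close>
definition bern_h :: "complex fps" where
  "bern_h = fps_shift 1 (fps_exp 1 - 1) - 1"

text \<open>(t/(e^t-1))^alpha := (1+h)^(-alpha) = sum_k (-1)^k binom(k+alpha-1,k) h^k,
  the formal sum taken coefficientwise (each coefficient sum has finite support since h has no constant term).\<close>
definition td_pow :: "complex \<Rightarrow> complex fps" where
  "td_pow \<alpha> = Abs_fps (\<lambda>n. \<Sum>k. (-1)^k * ((of_nat k + \<alpha> - 1) gchoose k) * fps_nth (bern_h ^ k) n)"

definition gen_bernoulli :: "complex \<Rightarrow> nat \<Rightarrow> complex \<Rightarrow> complex" where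
  "gen_bernoulli \<alpha> n x = fact n * fps_nth (fps_exp x * td_pow \<alpha>) n"

definition T_coeff :: "complex \<Rightarrow> nat \<Rightarrow> complex" where
  "T_coeff \<alpha> n = (\<Sum>k=0..n. (-1)^k * ((of_nat k + \<alpha> - 1) gchoose k) *
      (\<Sum>j=0..k. fact j * (-1)^(k+j) / fact (n+j) * of_nat (k choose j) * of_nat (Stirling (n+j) j)))"

end

theory Submission
  imports Defs
begin
unbundle fps_syntax

abbreviation EE :: "complex fps" where "EE \<equiv> fps_exp 1 - 1"

lemma EE_pow_nth: "(EE ^ j) $ m = fact j * of_nat (Stirling m j) / fact m"
proof (induction m arbitrary: j)
  case 0
  then show ?case by (cases j) (simp_all add: fps_power_zeroth)
next
  case (Suc m)
  show ?case
  proof (cases j)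
    case 0
    then show ?thesis by simp
  next
    case (Suc i)
    have d1: "fps_deriv (EE ^ Suc i) = of_nat (Suc i) * fps_deriv EE * EE ^ i"
      using fps_deriv_power'[of EE "Suc i"] by simp
    have d2: "fps_deriv EE = EE + 1" by simp
    have d: "fps_deriv (EE ^ Suc i) = of_nat (Suc i) * (EE ^ Suc i + EE ^ i)"
      unfolding d1 d2 by (simp only: power_Suc ring_distribs mult_1_left mult.assoc)
    have "of_nat (Suc m) * (EE ^ Suc i) $ Suc m = fps_deriv (EE ^ Suc i) $ m"
      by (simp only: fps_deriv_nth Suc_eq_plus1)
    also have "\<dots> = (of_nat (Suc i) * (EE ^ Suc i + EE ^ i)) $ m" by (simp only: d)
    also have "\<dots> = of_nat (Suc i) * ((EE ^ Suc i) $ m + (EE ^ i) $ m)"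
      by (simp only: fps_of_nat[symmetric] fps_mult_left_const_nth fps_add_nth)
    also have "\<dots> = of_nat (Suc i) * (fact (Suc i) * of_nat (Stirling m (Suc i)) / fact m
        + fact i * of_nat (Stirling m i) / fact m)" by (simp only: Suc.IH)
    also have "\<dots> = fact (Suc i) * of_nat (Stirling (Suc m) (Suc i)) / fact m"
      by (simp add: field_simps)
    finally have "(EE ^ Suc i) $ Suc m = fact (Suc i) * of_nat (Stirling (Suc m) (Suc i)) / fact (Suc m)"
      by (simp add: field_simps del: of_nat_Suc)
    then show ?thesis using Suc by simp
  qed
qed

abbreviation GG :: "complex fps" where "GG \<equiv> fps_shift 1 EE"

lemma GG_X: "GG * fps_X = EE"
  by (rule fps_ext, case_tac n) simp_all

lemma GG_pow_nth: "(GG ^ j) $ n = fact j * of_nat (Stirling (n+j) j) / fact (n+j)"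
proof -
  have "EE ^ j = GG ^ j * fps_X ^ j" using GG_X by (metis power_mult_distrib)
  then have "(EE ^ j) $ (n+j) = (GG ^ j) $ n" by (simp add: fps_X_power_mult_right_nth)
  then show ?thesis using EE_pow_nth by simp
qed

lemma h_pow: "bern_h ^ k = (\<Sum>j\<le>k. fps_const (of_nat (k choose j) * (-1)^(k-j)) * GG ^ j)"
proof -
  have "bern_h ^ k = (GG + (-1)) ^ k" by (simp add: bern_h_def)
  also have "\<dots> = (\<Sum>j\<le>k. of_nat (k choose j) * GG ^ j * (-1) ^ (k-j))"
    by (rule binomial_ring)
  also have "\<dots> = (\<Sum>j\<le>k. fps_const (of_nat (k choose j) * (-1)^(k-j)) * GG ^ j)"
    by (intro sum.cong refl) (simp add: fps_of_nat[symmetric] fps_const_power[symmetric] fps_const_neg[symmetric] fps_const_mult[symmetric] flip: fps_const_mult del: fps_const_neg)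
  finally show ?thesis .
qed

lemma h_pow_nth: "(bern_h ^ k) $ n = (\<Sum>j=0..k. fact j * (-1)^(k+j) / fact (n+j) * of_nat (k choose j) * of_nat (Stirling (n+j) j))"
proof -
  have "(bern_h ^ k) $ n = (\<Sum>j\<le>k. (of_nat (k choose j) * (-1)^(k-j)) * (fact j * of_nat (Stirling (n+j) j) / fact (n+j)))"
    unfolding h_pow fps_sum_nth fps_mult_left_const_nth GG_pow_nth ..
  also have "\<dots> = (\<Sum>j=0..k. fact j * (-1)^(k+j) / fact (n+j) * of_nat (k choose j) * of_nat (Stirling (n+j) j))"
    unfolding atMost_atLeast0
  proof (intro sum.cong refl)
    fix j assume "j \<in> {0..k}"
    then have "k + j = (k - j) + 2 * j" by auto
    then have "(-1::complex)^(k+j) = (-1)^(k-j) * ((-1)^2)^j" by (simp only: power_add power_mult)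
    then have "(-1::complex)^(k+j) = (-1)^(k-j)" by simp
    then show "(of_nat (k choose j) * (-1)^(k-j)) * (fact j * of_nat (Stirling (n+j) j) / fact (n+j))
      = fact j * (-1)^(k+j) / fact (n+j) * of_nat (k choose j) * (of_nat (Stirling (n+j) j) :: complex)"
      by simp
  qed
  finally show ?thesis .
qed

lemma h0: "bern_h $ 0 = 0" by (simp add: bern_h_def)

lemma td_pow_eq: "td_pow \<alpha> = Abs_fps (T_coeff \<alpha>)"
proof (rule fps_ext)
  fix n
  have "td_pow \<alpha> $ n = (\<Sum>k. (-1)^k * ((of_nat k + \<alpha> - 1) gchoose k) * (bern_h ^ k) $ n)"
    by (simp add: td_pow_def)
  also have "\<dots> = (\<Sum>k=0..n. (-1)^k * ((of_nat k + \<alpha> - 1) gchoose k) * (bern_h ^ k) $ n)"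
  proof (rule suminf_finite)
    fix k assume "k \<notin> {0..n}"
    then have "n < k" by auto
    then show "(-1)^k * ((of_nat k + \<alpha> - 1) gchoose k) * (bern_h ^ k) $ n = 0"
      using startsby_zero_power_prefix[OF h0] by simp
  qed simp
  also have "\<dots> = T_coeff \<alpha> n"
    unfolding T_coeff_def h_pow_nth ..
  finally show "td_pow \<alpha> $ n = Abs_fps (T_coeff \<alpha>) $ n" by simp
qed

theorem mainTheorem10:
  fixes \<alpha> :: complex
  shows "td_pow \<alpha> = Abs_fps (T_coeff \<alpha>)
    \<and> (\<forall>n x. gen_bernoulli \<alpha> n x =
          fact n * (\<Sum>i=0..n. T_coeff \<alpha> i * x ^ (n - i) / fact (n - i)))"
proof (intro conjI allI)
  show "td_pow \<alpha> = Abs_fps (T_coeff \<alpha>)" by (rule td_pow_eq)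
  fix n x
  have "gen_bernoulli \<alpha> n x = fact n * (Abs_fps (T_coeff \<alpha>) * fps_exp x) $ n"
    by (simp add: gen_bernoulli_def td_pow_eq mult.commute)
  also have "\<dots> = fact n * (\<Sum>i=0..n. T_coeff \<alpha> i * x ^ (n - i) / fact (n - i))"
    by (simp add: fps_mult_nth)
  finally show "gen_bernoulli \<alpha> n x =
          fact n * (\<Sum>i=0..n. T_coeff \<alpha> i * x ^ (n - i) / fact (n - i))" .
qed

end
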